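(* Let $G=(V,E)$ be a graph and let $f_0,f_t\colon V\to\{1,2\}$ be token-placements with $f_0\simeq f_t$. Let $G_B$ be the complete bipartite graph with parts $X=\{x_v : v\in V,\ f_0(v)=1\}$ and $Y=\{y_v: v\in V,\ f_t(v)=1\}$, where the edge $(x_u,y_v)$ has weight $w(x_u,y_v)=\mathrm{dist}_G(u,v)$, the length of a shortest $u$–$v$ path in $G$ ($\infty$ if none). Then $\mathrm{OPT}(f_0,f_t)=\min_M \sum_{e\in M}w(e)$, where the minimum is over all perfect matchings $M$ of $G_B$.
   Context: Graphs are finite, simple and undirected. A token-placement of $G=(V,E)$ with colors $C=\{1,\dots,c\}$ is a surjective map $f\colon V\to C$. Two distinct token-placements $f,f'$ are adjacent if there is an edge $uv\in E$ with $f'(u)=f(v)$, $f'(v)=f(u)$ and $f'(w)=f(w)$ for all other $w$. A swapping sequence between $f$ and $f'$ is a sequence $f_1=f,\dots,f_h=f'$ of token-placements with consecutive members adjacent; its length is $h-1$. $\mathrm{OPT}(f,f')$ is the minimum length of such a sequence ($\infty$ if none). $f\simeq f'$ means that for every connected component $K$ of $G$ and every color $i$, the numbers of vertices of $K$ with $f$-color $i$ and with $f'$-color $i$ coincide. *)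

theory Defs
  imports Main "HOL-Library.Extended_Nat"
begin

definition simple_graph :: "('a::finite \<Rightarrow> 'a \<Rightarrow> bool) \<Rightarrow> bool" where
  "simple_graph E \<longleftrightarrow> symp E \<and> irreflp E"

definition token_placement :: "nat \<Rightarrow> ('a::finite \<Rightarrow> nat) \<Rightarrow> bool" where
  "token_placement c f \<longleftrightarrow> range f = {1..c}"

definition tp_adjacent :: "('a \<Rightarrow> 'a \<Rightarrow> bool) \<Rightarrow> ('a \<Rightarrow> nat) \<Rightarrow> ('a \<Rightarrow> nat) \<Rightarrow> bool" where
  "tp_adjacent E f f' \<longleftrightarrow> f \<noteq> f' \<and>
     (\<exists>u v. E u v \<and> f' u = f v \<and> f' v = f u \<and> (\<forall>w. w \<noteq> u \<and> w \<noteq> v \<longrightarrow> f' w = f w))"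

definition swapping_sequence :: "nat \<Rightarrow> ('a::finite \<Rightarrow> 'a \<Rightarrow> bool) \<Rightarrow> ('a \<Rightarrow> nat) \<Rightarrow> ('a \<Rightarrow> nat)
    \<Rightarrow> ('a \<Rightarrow> nat) list \<Rightarrow> bool" where
  "swapping_sequence c E f f' fs \<longleftrightarrow> fs \<noteq> [] \<and> hd fs = f \<and> last fs = f' \<and>
     (\<forall>g \<in> set fs. token_placement c g) \<and>
     (\<forall>i. Suc i < length fs \<longrightarrow> tp_adjacent E (fs ! i) (fs ! Suc i))"

definition OPT :: "nat \<Rightarrow> ('a::finite \<Rightarrow> 'a \<Rightarrow> bool) \<Rightarrow> ('a \<Rightarrow> nat) \<Rightarrow> ('a \<Rightarrow> nat) \<Rightarrow> enat" where
  "OPT c E f f' = (INF fs \<in> {fs. swapping_sequence c E f f' fs}. enat (length fs - 1))"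

definition walk :: "('a \<Rightarrow> 'a \<Rightarrow> bool) \<Rightarrow> 'a \<Rightarrow> 'a \<Rightarrow> 'a list \<Rightarrow> bool" where
  "walk E u v p \<longleftrightarrow> p \<noteq> [] \<and> hd p = u \<and> last p = v \<and>
     (\<forall>i. Suc i < length p \<longrightarrow> E (p ! i) (p ! Suc i))"

definition graph_dist :: "('a \<Rightarrow> 'a \<Rightarrow> bool) \<Rightarrow> 'a \<Rightarrow> 'a \<Rightarrow> enat" where
  "graph_dist E u v = (INF p \<in> {p. walk E u v p}. enat (length p - 1))"

definition components :: "('a \<Rightarrow> 'a \<Rightarrow> bool) \<Rightarrow> 'a set set" where
  "components E = {{u. E\<^sup>*\<^sup>* v u} | v. True}"

definition tp_equiv :: "('a::finite \<Rightarrow> 'a \<Rightarrow> bool) \<Rightarrow> ('a \<Rightarrow> nat) \<Rightarrow> ('a \<Rightarrow> nat) \<Rightarrow> bool" where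
  "tp_equiv E f f' \<longleftrightarrow> (\<forall>K \<in> components E. \<forall>i.
      card {v \<in> K. f v = i} = card {v \<in> K. f' v = i})"

text \<open>Perfect matchings of the complete bipartite graph with parts X and Y
(an edge (x_u, y_v) is represented by the pair (u, v)).\<close>
definition perfect_matchings :: "'a set \<Rightarrow> 'a set \<Rightarrow> ('a \<times> 'a) set set" where
  "perfect_matchings X Y = {M. M \<subseteq> X \<times> Y \<and>
      (\<forall>x \<in> X. \<exists>!y. (x, y) \<in> M) \<and> (\<forall>y \<in> Y. \<exists>!x. (x, y) \<in> M)}"

end

theory Submission imports Defs begin

lemma gd_le: "walk E u v p \<Longrightarrow> graph_dist E u v \<le> enat (length p - 1)"
  unfolding graph_dist_def by (rule INF_lower) simp

lemma gd_attained:
  assumes "graph_dist E u v \<noteq> \<infinity>"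
  shows "\<exists>p. walk E u v p \<and> graph_dist E u v = enat (length p - 1)"
proof -
  let ?A = "(\<lambda>p. enat (length p - 1)) ` {p. walk E u v p}"
  have ne: "?A \<noteq> {}"
  proof
    assume e: "?A = {}"
    have "graph_dist E u v = Inf ?A" unfolding graph_dist_def by simp
    also have "\<dots> = \<infinity>" unfolding e by (simp add: top_enat_def)
    finally show False using assms by simp
  qed
  have "Inf ?A \<in> ?A" using ne unfolding Inf_enat_def by (auto intro: LeastI)
  then show ?thesis unfolding graph_dist_def by auto
qed

lemma walk_single: "walk E u u [u]"
  unfolding walk_def by auto

lemma gd_refl: "graph_dist E u u = 0"
  using gd_le[OF walk_single, of E u] by (simp add: zero_enat_def[symmetric])

lemma gd_zero: "graph_dist E u v = 0 \<Longrightarrow> u = v"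
proof -
  assume a: "graph_dist E u v = 0"
  then obtain p where p: "walk E u v p" "graph_dist E u v = enat (length p - 1)"
    using gd_attained[of E u v] by (auto simp: zero_enat_def)
  have "length p - 1 = 0" using a p(2) by (simp add: zero_enat_def)
  moreover have "p \<noteq> []" using p(1) by (simp add: walk_def)
  ultimately have "length p = 1" by (cases p) auto
  then show ?thesis using p(1) unfolding walk_def by (cases p) auto
qed

lemma walk_cons: "E u x \<Longrightarrow> walk E x v q \<Longrightarrow> walk E u v (u # q)"
  unfolding walk_def
  by (auto simp: nth_Cons hd_conv_nth split: nat.split)

lemma walk_tl: "walk E u v (u # x # q) \<Longrightarrow> walk E x v (x # q) \<and> E u x"
proof -
  assume w: "walk E u v (u # x # q)"
  have e: "\<And>i. Suc i < length (u # x # q) \<Longrightarrow> E ((u # x # q) ! i) ((u # x # q) ! Suc i)"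
    using w unfolding walk_def by blast
  have "E ((x # q) ! i) ((x # q) ! Suc i)" if "Suc i < length (x # q)" for i
    using e[of "Suc i"] that by simp
  moreover have "E u x" using e[of 0] by simp
  ultimately show ?thesis using w unfolding walk_def by simp
qed

lemma gd_edge: "E u x \<Longrightarrow> graph_dist E u y \<le> 1 + graph_dist E x y"
proof (cases "graph_dist E x y = \<infinity>")
  case False
  assume e: "E u x"
  obtain q where q: "walk E x y q" "graph_dist E x y = enat (length q - 1)"
    using gd_attained[OF False] by blast
  have "q \<noteq> []" using q by (simp add: walk_def)
  have "graph_dist E u y \<le> enat (length (u # q) - 1)"
    by (rule gd_le, rule walk_cons[OF e q(1)])
  also have "\<dots> = 1 + graph_dist E x y" using q(2) \<open>q \<noteq> []\<close>
    by (cases q) (auto simp: one_enat_def)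
  finally show ?thesis .
qed simp

lemma gd_next:
  assumes "graph_dist E u v = enat (Suc k)"
  shows "\<exists>x. E u x \<and> graph_dist E x v = enat k"
proof -
  obtain p where p: "walk E u v p" "graph_dist E u v = enat (length p - 1)"
    using gd_attained[of E u v] assms by auto
  have len: "length p = Suc (Suc k)" using p assms by (auto simp: walk_def)
  then obtain x q where pq: "p = u # x # q" using p(1)
    by (cases p; cases "tl p") (auto simp: walk_def)
  have "walk E x v (x # q) \<and> E u x" using p(1) unfolding pq by (rule walk_tl)
  then have w: "walk E x v (x # q)" "E u x" by auto
  have "graph_dist E x v \<le> enat k" using gd_le[OF w(1)] len pq by simp
  moreover have "enat (Suc k) \<le> 1 + graph_dist E x v" using gd_edge[of E u x v, OF w(2)] assms by simp
  ultimately have "graph_dist E x v = enat k"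
    by (cases "graph_dist E x v") (auto simp: one_enat_def)
  then show ?thesis using w by blast
qed


definition mcost :: "('a \<Rightarrow> 'a \<Rightarrow> bool) \<Rightarrow> ('a \<times> 'a) set \<Rightarrow> enat" where
  "mcost E M = (\<Sum>(u, v) \<in> M. graph_dist E u v)"

lemma mcost_remove:
  fixes M :: "('a::finite \<times> 'a) set"
  shows "(a, b) \<in> M \<Longrightarrow> mcost E M = graph_dist E a b + mcost E (M - {(a, b)})"
  unfolding mcost_def by (subst sum.remove[of M "(a,b)"]) auto

lemma mcost_insert:
  fixes M :: "('a::finite \<times> 'a) set"
  shows "(a, b) \<notin> M \<Longrightarrow> mcost E (insert (a, b) M) = graph_dist E a b + mcost E M"
  unfolding mcost_def by (subst sum.insert) auto

lemma pm_intro: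
  assumes "M \<subseteq> X \<times> Y" "\<And>x. x \<in> X \<Longrightarrow> \<exists>y. (x, y) \<in> M" "\<And>y. y \<in> Y \<Longrightarrow> \<exists>x. (x, y) \<in> M"
    "\<And>a b b'. (a, b) \<in> M \<Longrightarrow> (a, b') \<in> M \<Longrightarrow> b = b'"
    "\<And>a a' b. (a, b) \<in> M \<Longrightarrow> (a', b) \<in> M \<Longrightarrow> a = a'"
  shows "M \<in> perfect_matchings X Y"
  unfolding perfect_matchings_def using assms by blast

lemma pm_D:
  assumes "M \<in> perfect_matchings X Y"
  shows "\<And>p q. (p, q) \<in> M \<Longrightarrow> p \<in> X" "\<And>p q. (p, q) \<in> M \<Longrightarrow> q \<in> Y"
    "\<And>x. x \<in> X \<Longrightarrow> \<exists>y. (x, y) \<in> M" "\<And>y. y \<in> Y \<Longrightarrow> \<exists>x. (x, y) \<in> M"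
    "\<And>a b b'. (a, b) \<in> M \<Longrightarrow> (a, b') \<in> M \<Longrightarrow> b = b'"
    "\<And>a a' b. (a, b) \<in> M \<Longrightarrow> (a', b) \<in> M \<Longrightarrow> a = a'"
  using assms unfolding perfect_matchings_def by blast+

lemma pm_replace:
  assumes "M \<in> perfect_matchings X Y" "(a, b) \<in> M" "a' \<notin> X" "X' = X - {a} \<union> {a'}"
  shows "insert (a', b) (M - {(a, b)}) \<in> perfect_matchings X' Y"
proof -
  note D = pm_D[OF assms(1)]
  show ?thesis
  proof (rule pm_intro)
    show "insert (a', b) (M - {(a, b)}) \<subseteq> X' \<times> Y"
    proof
      fix z assume z: "z \<in> insert (a', b) (M - {(a, b)})"
      obtain p q where pq: "z = (p, q)" by (cases z)
      show "z \<in> X' \<times> Y"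
      proof (cases "z = (a', b)")
        case True then show ?thesis using D(2)[OF assms(2)] assms(4) by simp
      next
        case False
        then have m: "(p, q) \<in> M" "(p, q) \<noteq> (a, b)" using z pq by auto
        have "p \<noteq> a" using m D(5) assms(2) by blast
        then show ?thesis using D(1)[OF m(1)] D(2)[OF m(1)] pq assms(4) by simp
      qed
    qed
    show "\<exists>y. (x, y) \<in> insert (a', b) (M - {(a, b)})" if "x \<in> X'" for x
    proof (cases "x = a'")
      case False
      then have "x \<in> X" "x \<noteq> a" using that assms(4) by auto
      then obtain y where "(x, y) \<in> M" using D(3) by blast
      then show ?thesis using \<open>x \<noteq> a\<close> by blast
    qed auto
    show "\<exists>x. (x, y) \<in> insert (a', b) (M - {(a, b)})" if "y \<in> Y" for y
    proof (cases "y = b")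
      case False
      obtain x where "(x, y) \<in> M" using D(4) \<open>y \<in> Y\<close> by blast
      then show ?thesis using False by blast
    qed auto
    show "b1 = b2" if "(p, b1) \<in> insert (a', b) (M - {(a, b)})" "(p, b2) \<in> insert (a', b) (M - {(a, b)})" for p b1 b2
      using that D(1,5) assms(3) by blast
    show "p1 = p2" if "(p1, q) \<in> insert (a', b) (M - {(a, b)})" "(p2, q) \<in> insert (a', b) (M - {(a, b)})" for p1 p2 q
      using that D(6) assms(2) by blast
  qed
qed

lemma pm_exchange:
  assumes "M \<in> perfect_matchings X Y" "(a, b) \<in> M" "(c, d) \<in> M" "a \<noteq> c"
  shows "insert (a, d) (insert (c, b) (M - {(a, b)} - {(c, d)})) \<in> perfect_matchings X Y"
proof -
  note D = pm_D[OF assms(1)]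
  have bd: "b \<noteq> d" using D(6) assms by blast
  let ?N = "insert (a, d) (insert (c, b) (M - {(a, b)} - {(c, d)}))"
  show ?thesis
  proof (rule pm_intro)
    have "M \<subseteq> X \<times> Y"
    proof
      fix z assume "z \<in> M" then show "z \<in> X \<times> Y" using D(1,2) by (cases z) auto
    qed
    moreover have "(a, d) \<in> X \<times> Y" using D(1)[OF assms(2)] D(2)[OF assms(3)] by simp
    moreover have "(c, b) \<in> X \<times> Y" using D(1)[OF assms(3)] D(2)[OF assms(2)] by simp
    ultimately show "?N \<subseteq> X \<times> Y" by blast
    show "\<exists>y. (x, y) \<in> ?N" if "x \<in> X" for x
    proof -
      obtain y where y: "(x, y) \<in> M" using D(3) \<open>x \<in> X\<close> by blast
      show ?thesis
      proof (cases "x = a \<or> x = c")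
        case False then show ?thesis using y by blast
      qed blast
    qed
    show "\<exists>x. (x, y) \<in> ?N" if "y \<in> Y" for y
    proof -
      obtain x where x: "(x, y) \<in> M" using D(4) \<open>y \<in> Y\<close> by blast
      show ?thesis
      proof (cases "y = b \<or> y = d")
        case False then show ?thesis using x by blast
      qed blast
    qed
    show "b1 = b2" if "(p, b1) \<in> ?N" "(p, b2) \<in> ?N" for p b1 b2
      using that D(5) assms(2,3,4) by blast
    show "p1 = p2" if "(p1, q) \<in> ?N" "(p2, q) \<in> ?N" for p1 p2 q
      using that D(6) assms(2,3) bd by blast
  qed
qed

lemma pm_card:
  fixes X Y :: "'a::finite set"
  assumes "M \<in> perfect_matchings X Y"
  shows "card X = card Y"
proof -
  note D = pm_D[OF assms]
  have i1: "inj_on fst M"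
  proof (rule inj_onI)
    fix z z' assume "z \<in> M" "z' \<in> M" "fst z = fst z'"
    then show "z = z'" by (metis D(5) prod.collapse)
  qed
  have i2: "inj_on snd M"
  proof (rule inj_onI)
    fix z z' assume "z \<in> M" "z' \<in> M" "snd z = snd z'"
    then show "z = z'" by (metis D(6) prod.collapse)
  qed
  have e1: "fst ` M = X"
  proof
    show "fst ` M \<subseteq> X" using D(1) by force
    show "X \<subseteq> fst ` M"
    proof
      fix x assume "x \<in> X"
      then obtain y where "(x, y) \<in> M" using D(3) by blast
      then show "x \<in> fst ` M" by (rule image_eqI[rotated]) simp
    qed
  qed
  have e2: "snd ` M = Y"
  proof
    show "snd ` M \<subseteq> Y" using D(2) by force
    show "Y \<subseteq> snd ` M"
    proof
      fix y assume "y \<in> Y"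
      then obtain x where "(x, y) \<in> M" using D(4) by blast
      then show "y \<in> snd ` M" by (rule image_eqI[rotated]) simp
    qed
  qed
  have "card X = card M" using card_image[OF i1] e1 by simp
  also have "\<dots> = card Y" using card_image[OF i2] e2 by simp
  finally show ?thesis .
qed

lemma pm_sub: "M \<in> perfect_matchings X Y \<Longrightarrow> (a, b) \<in> M \<Longrightarrow> a \<in> X \<and> b \<in> Y"
  unfolding perfect_matchings_def by auto

lemma pm_u1: "M \<in> perfect_matchings X Y \<Longrightarrow> (a, b) \<in> M \<Longrightarrow> (a, b') \<in> M \<Longrightarrow> b = b'"
  by (rule pm_D(5))

lemma pm_u2: "M \<in> perfect_matchings X Y \<Longrightarrow> (a, b) \<in> M \<Longrightarrow> (a', b) \<in> M \<Longrightarrow> a = a'"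
  by (rule pm_D(6))

lemma pm_ex1: "M \<in> perfect_matchings X Y \<Longrightarrow> a \<in> X \<Longrightarrow> \<exists>b. (a, b) \<in> M"
  unfolding perfect_matchings_def by auto

lemma pm_ex2: "M \<in> perfect_matchings X Y \<Longrightarrow> b \<in> Y \<Longrightarrow> \<exists>a. (a, b) \<in> M"
  unfolding perfect_matchings_def by auto

lemma tp_vals: "token_placement 2 f \<Longrightarrow> f y = 1 \<or> f y = 2"
proof -
  assume "token_placement 2 f"
  then have "f y \<in> {1..2}" unfolding token_placement_def by (metis rangeI)
  then show ?thesis by auto
qed

lemma tp_intro:
  assumes "\<And>y. f y = 1 \<or> f y = 2" "f a = 1" "f b = 2"
  shows "token_placement 2 f"
  unfolding token_placement_def
proof (rule antisym)
  show "range f \<subseteq> {1..2}"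
  proof
    fix z assume "z \<in> range f"
    then obtain y where "z = f y" by blast
    then show "z \<in> {1..2}" using assms(1)[of y] by auto
  qed
  show "{1..2} \<subseteq> range f"
  proof
    fix z :: nat assume "z \<in> {1..2}"
    then have "z = 1 \<or> z = 2" by auto
    then show "z \<in> range f" using assms(2,3) by (metis rangeI)
  qed
qed

lemma step:
  fixes f :: "'a::finite \<Rightarrow> nat"
  assumes "token_placement 2 f" "M \<in> perfect_matchings {x. f x = 1} Y" "(u, v) \<in> M" "f v \<noteq> 1"
    "graph_dist E u v = enat k"
  shows "\<exists>f' M'. tp_adjacent E f f' \<and> token_placement 2 f' \<and>
           M' \<in> perfect_matchings {x. f' x = 1} Y \<and> mcost E M' + 1 \<le> mcost E M"
  using assms
proof (induction k arbitrary: u M)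
  case 0
  then have "u = v" using gd_zero[of E u v] by (simp add: zero_enat_def)
  moreover have "f u = 1" using 0 pm_sub by fastforce
  ultimately show ?case using 0 by simp
next
  case (Suc k)
  obtain x where x: "E u x" "graph_dist E x v = enat k" using gd_next[OF Suc.prems(5)] by blast
  have fu: "f u = 1" using Suc.prems(2,3) pm_sub by fastforce
  have ux: "u \<noteq> x"
  proof
    assume "u = x"
    then have "enat (Suc k) = enat k" using x(2) Suc.prems(5) by simp
    then show False by simp
  qed
  have vY: "v \<in> Y" using Suc.prems(2,3) pm_sub by fastforce
  show ?case
  proof (cases "f x = 1")
    case False
    then have fx: "f x = 2" using tp_vals[OF Suc.prems(1)] by metis
    define f' where "f' = f(u := 2, x := 1)"
    define M' where "M' = insert (x, v) (M - {(u, v)})"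
    have f'u: "f' u = 2" and f'x: "f' x = 1" using ux by (auto simp: f'_def)
    have "f \<noteq> f'" using fu f'u by auto
    then have adj: "tp_adjacent E f f'" unfolding tp_adjacent_def
      apply (intro conjI, assumption)
      apply (rule exI[of _ u], rule exI[of _ x])
      using x(1) fu fx ux by (auto simp: f'_def)
    have tp: "token_placement 2 f'"
      by (rule tp_intro[of f' x u]) (use tp_vals[OF Suc.prems(1)] ux in \<open>auto simp: f'_def\<close>)
    have pm: "M' \<in> perfect_matchings {y. f' y = 1} Y" unfolding M'_def
      by (rule pm_replace[OF Suc.prems(2,3)]) (use False ux fu in \<open>auto simp: f'_def\<close>)
    have "(x, v) \<notin> M - {(u, v)}" using False Suc.prems(2) pm_sub by fastforce
    then have c1: "mcost E M' = enat k + mcost E (M - {(u, v)})"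
      unfolding M'_def by (simp add: mcost_insert x(2))
    have c2: "mcost E M = enat (Suc k) + mcost E (M - {(u, v)})"
      using mcost_remove[OF Suc.prems(3)] Suc.prems(5) by simp
    have "mcost E M' + 1 \<le> mcost E M" unfolding c1 c2
      by (simp add: one_enat_def[symmetric] eSuc_enat[symmetric] eSuc_plus_1 ac_simps)
    then show ?thesis using adj tp pm by blast
  next
    case True
    obtain w where w: "(x, w) \<in> M" using pm_ex1[OF Suc.prems(2)] True by auto
    have wv: "w \<noteq> v"
    proof
      assume "w = v"
      then have "(x, v) \<in> M" using w by simp
      then have "x = u" using pm_u2[OF Suc.prems(2) _ Suc.prems(3)] by blast
      then show False using ux by simp
    qed
    define R where "R = M - {(u, v)} - {(x, w)}"
    define M'' where "M'' = insert (u, w) (insert (x, v) R)"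
    have pm: "M'' \<in> perfect_matchings {y. f y = 1} Y"
      unfolding M''_def R_def by (rule pm_exchange[OF Suc.prems(2,3) w ux])
    have xvM: "(x, v) \<in> M''" unfolding M''_def by simp
    have n1: "(x, v) \<notin> R"
    proof
      assume "(x, v) \<in> R"
      then have "(x, v) \<in> M" unfolding R_def by blast
      then have "x = u" using pm_u2[OF Suc.prems(2) _ Suc.prems(3)] by blast
      then show False using ux by simp
    qed
    have n2: "(u, w) \<notin> insert (x, v) R"
    proof
      assume "(u, w) \<in> insert (x, v) R"
      then have "(u, w) \<in> M" unfolding R_def using ux by blast
      then have "v = w" using pm_u1[OF Suc.prems(2) Suc.prems(3)] by blast
      then show False using wv by simp
    qed
    have "(x, w) \<in> M - {(u, v)}" using w ux by auto
    have cM: "mcost E M = enat (Suc k) + (graph_dist E x w + mcost E R)"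
      using mcost_remove[OF Suc.prems(3)] mcost_remove[OF \<open>(x, w) \<in> M - {(u, v)}\<close>] Suc.prems(5)
      unfolding R_def by simp
    have cM'': "mcost E M'' = graph_dist E u w + (enat k + mcost E R)"
      unfolding M''_def using n1 n2 by (simp add: mcost_insert x(2))
    have "graph_dist E u w \<le> 1 + graph_dist E x w" by (rule gd_edge[of E u x w, OF x(1)])
    then have le: "mcost E M'' \<le> mcost E M" unfolding cM cM''
      by (simp add: one_enat_def[symmetric] eSuc_enat[symmetric] eSuc_plus_1 ac_simps add_right_mono)
    obtain f' M' where r: "tp_adjacent E f f'" "token_placement 2 f'"
      "M' \<in> perfect_matchings {x. f' x = 1} Y" "mcost E M' + 1 \<le> mcost E M''"
      using Suc.IH[OF Suc.prems(1) pm xvM Suc.prems(4) x(2)] by blast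
    then show ?thesis using le order_trans by blast
  qed
qed


lemma ss_cons:
  assumes "swapping_sequence c E g ft fs" "tp_adjacent E f g" "token_placement c f"
  shows "swapping_sequence c E f ft (f # fs)"
  using assms unfolding swapping_sequence_def
  by (auto simp: nth_Cons hd_conv_nth split: nat.split)

lemma ss_tail:
  assumes "swapping_sequence c E f ft (g # fs)" "fs \<noteq> []"
  shows "swapping_sequence c E (hd fs) ft fs \<and> tp_adjacent E f (hd fs) \<and> token_placement c f \<and> g = f"
proof -
  have a: "\<forall>i. Suc i < length (g # fs) \<longrightarrow> tp_adjacent E ((g # fs) ! i) ((g # fs) ! Suc i)"
    using assms(1) unfolding swapping_sequence_def by blast
  have "tp_adjacent E f (hd fs)" using a[rule_format, of 0] assms by (simp add: hd_conv_nth swapping_sequence_def)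
  moreover have "\<forall>i. Suc i < length fs \<longrightarrow> tp_adjacent E (fs ! i) (fs ! Suc i)"
    using a by auto
  ultimately show ?thesis using assms unfolding swapping_sequence_def by auto
qed

lemma upper:
  fixes f ft :: "'a::finite \<Rightarrow> nat"
  assumes ft: "token_placement 2 ft"
  shows "token_placement 2 f \<Longrightarrow> M \<in> perfect_matchings {x. f x = 1} {x. ft x = 1} \<Longrightarrow>
     mcost E M = enat n \<Longrightarrow> \<exists>fs. swapping_sequence 2 E f ft fs \<and> length fs - 1 \<le> n"
proof (induction n arbitrary: f M rule: less_induct)
  case (less n)
  show ?case
  proof (cases "{x. f x = 1} = {x. ft x = 1}")
    case True
    have "f = ft"
    proof
      fix y
      show "f y = ft y" using True[unfolded set_eq_iff, rule_format, of y] tp_vals[OF less.prems(1), of y] tp_vals[OF ft, of y] by auto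
    qed
    then have "swapping_sequence 2 E f ft [f]" using less.prems(1)
      unfolding swapping_sequence_def by simp
    then show ?thesis by fastforce
  next
    case False
    have "card {x. f x = 1} = card {x. ft x = 1}" using pm_card[OF less.prems(2)] .
    then have "\<not> {x. ft x = 1} \<subseteq> {x. f x = 1}" using False card_subset_eq[of "{x. f x = 1}"] by auto
    then obtain v where v: "ft v = 1" "f v \<noteq> 1" by auto
    obtain u where uv: "(u, v) \<in> M" using pm_ex2[OF less.prems(2)] v by auto
    have "graph_dist E u v \<le> enat n" using mcost_remove[OF uv, of E] less.prems(3)
      by (metis le_iff_add)
    then obtain k where k: "graph_dist E u v = enat k" by (cases "graph_dist E u v") auto
    obtain f' M' where r: "tp_adjacent E f f'" "token_placement 2 f'"
      "M' \<in> perfect_matchings {x. f' x = 1} {x. ft x = 1}" "mcost E M' + 1 \<le> mcost E M"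
      using step[OF less.prems(1,2) uv v(2) k] by blast
    then obtain m where m: "mcost E M' = enat m" "m < n" using less.prems(3)
      by (cases "mcost E M'") (auto simp: one_enat_def)
    obtain fs where fs: "swapping_sequence 2 E f' ft fs" "length fs - 1 \<le> m"
      using less.IH[OF m(2) r(2) r(3) m(1)] by blast
    have "swapping_sequence 2 E f ft (f # fs)" by (rule ss_cons[OF fs(1) r(1) less.prems(1)])
    moreover have "length (f # fs) - 1 \<le> n" using fs m by (cases fs) auto
    ultimately show ?thesis by blast
  qed
qed

lemma swap_matching1:
  fixes f g :: "'a::finite \<Rightarrow> nat"
  assumes "E a b" "f a = 1" "f b = 2" "g a = 2" "g b = 1" "\<forall>w. w \<noteq> a \<and> w \<noteq> b \<longrightarrow> g w = f w"
    "M' \<in> perfect_matchings {x. g x = 1} Y"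
  shows "\<exists>M \<in> perfect_matchings {x. f x = 1} Y. mcost E M \<le> mcost E M' + 1"
proof -
  obtain y where y: "(b, y) \<in> M'" using pm_ex1[OF assms(7)] assms(5) by auto
  have ab: "a \<noteq> b" using assms by auto
  define M where "M = insert (a, y) (M' - {(b, y)})"
  have pm: "M \<in> perfect_matchings {x. f x = 1} Y" unfolding M_def
    by (rule pm_replace[OF assms(7) y]) (use assms ab in auto)
  have "(a, y) \<notin> M' - {(b, y)}" using pm_sub[OF assms(7)] assms(4) by fastforce
  then have c1: "mcost E M = graph_dist E a y + mcost E (M' - {(b, y)})"
    unfolding M_def by (simp add: mcost_insert)
  have c2: "mcost E M' = graph_dist E b y + mcost E (M' - {(b, y)})" by (rule mcost_remove[OF y])
  have ge: "graph_dist E a y \<le> 1 + graph_dist E b y" by (rule gd_edge[of E a b y, OF assms(1)])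
  have "mcost E M \<le> mcost E M' + 1" unfolding c1 c2
    using add_right_mono[OF ge, of "mcost E (M' - {(b, y)})"] by (simp add: ac_simps)
  then show ?thesis using pm by blast
qed

lemma swap_matching:
  fixes f g :: "'a::finite \<Rightarrow> nat"
  assumes "symp E" "tp_adjacent E f g" "token_placement 2 f" "token_placement 2 g"
    "M' \<in> perfect_matchings {x. g x = 1} Y"
  shows "\<exists>M \<in> perfect_matchings {x. f x = 1} Y. mcost E M \<le> mcost E M' + 1"
proof -
  obtain u v where uv: "f \<noteq> g" "E u v" "g u = f v" "g v = f u" "\<forall>w. w \<noteq> u \<and> w \<noteq> v \<longrightarrow> g w = f w"
    using assms(2) unfolding tp_adjacent_def by blast
  have "f u \<noteq> f v"
  proof
    assume "f u = f v"
    then have "f = g" using uv by (metis ext)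
    then show False using uv by simp
  qed
  then consider "f u = 1" "f v = 2" | "f u = 2" "f v = 1"
    using tp_vals[OF assms(3), of u] tp_vals[OF assms(3), of v] by auto
  then show ?thesis
  proof cases
    case 1
    show ?thesis by (rule swap_matching1[of E u v]) (use uv 1 assms in auto)
  next
    case 2
    have "E v u" using uv(2) assms(1) by (metis sympD)
    show ?thesis by (rule swap_matching1[of E v u]) (use uv 2 assms \<open>E v u\<close> in auto)
  qed
qed

lemma lower:
  fixes f ft :: "'a::finite \<Rightarrow> nat"
  assumes "symp E"
  shows "swapping_sequence 2 E f ft fs \<Longrightarrow>
    \<exists>M \<in> perfect_matchings {x. f x = 1} {x. ft x = 1}. mcost E M \<le> enat (length fs - 1)"
proof (induction fs arbitrary: f)
  case Nil
  then show ?case by (simp add: swapping_sequence_def)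
next
  case (Cons g fs)
  show ?case
  proof (cases "fs = []")
    case True
    then have "f = ft" using Cons.prems unfolding swapping_sequence_def by auto
    define M where "M = (\<lambda>x. (x, x)) ` {x. ft x = 1}"
    have "M \<in> perfect_matchings {x. f x = 1} {x. ft x = 1}"
      unfolding M_def perfect_matchings_def \<open>f = ft\<close> by auto
    moreover have "mcost E M = 0" unfolding mcost_def M_def
      by (rule sum.neutral) (auto simp: gd_refl)
    ultimately show ?thesis by (metis zero_le)
  next
    case False
    note t = ss_tail[OF Cons.prems False]
    obtain M' where M': "M' \<in> perfect_matchings {x. hd fs x = 1} {x. ft x = 1}"
      "mcost E M' \<le> enat (length fs - 1)" using Cons.IH t by blast
    have "token_placement 2 (hd fs)" using t False unfolding swapping_sequence_def by auto
    then obtain M where M: "M \<in> perfect_matchings {x. f x = 1} {x. ft x = 1}" "mcost E M \<le> mcost E M' + 1"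
      using swap_matching[OF assms _ _ _ M'(1)] t by blast
    have "mcost E M' + 1 \<le> enat (length fs - 1) + 1" using M'(2) by (rule add_right_mono)
    also have "\<dots> = enat (length (g # fs) - 1)" using False by (cases fs) (auto simp: one_enat_def)
    finally show ?thesis using M by (meson order_trans)
  qed
qed

theorem mainTheorem6:
  fixes E :: "'a::finite \<Rightarrow> 'a \<Rightarrow> bool" and f0 ft :: "'a \<Rightarrow> nat"
  assumes "simple_graph E"
    and "token_placement 2 f0" and "token_placement 2 ft"
    and "tp_equiv E f0 ft"
  shows "OPT 2 E f0 ft =
    (INF M \<in> perfect_matchings {v. f0 v = 1} {v. ft v = 1}. \<Sum>(u, v) \<in> M. graph_dist E u v)"
proof -
  have sy: "symp E" using assms(1) unfolding simple_graph_def by blast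
  have "OPT 2 E f0 ft = (INF M \<in> perfect_matchings {v. f0 v = 1} {v. ft v = 1}. mcost E M)"
  proof (rule antisym)
    show "OPT 2 E f0 ft \<le> (INF M \<in> perfect_matchings {v. f0 v = 1} {v. ft v = 1}. mcost E M)"
    proof (rule INF_greatest)
      fix M assume M: "M \<in> perfect_matchings {v. f0 v = 1} {v. ft v = 1}"
      show "OPT 2 E f0 ft \<le> mcost E M"
      proof (cases "mcost E M")
        case (enat n)
        obtain fs where fs: "swapping_sequence 2 E f0 ft fs" "length fs - 1 \<le> n"
          using upper[OF assms(3) assms(2) M enat] by blast
        have "OPT 2 E f0 ft \<le> enat (length fs - 1)" unfolding OPT_def
          by (rule INF_lower) (use fs in simp)
        also have "\<dots> \<le> enat n" using fs(2) by simp
        finally show ?thesis using enat by simp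
      qed simp
    qed
    show "(INF M \<in> perfect_matchings {v. f0 v = 1} {v. ft v = 1}. mcost E M) \<le> OPT 2 E f0 ft"
      unfolding OPT_def
    proof (rule INF_greatest)
      fix fs assume "fs \<in> {fs. swapping_sequence 2 E f0 ft fs}"
      then obtain M where "M \<in> perfect_matchings {v. f0 v = 1} {v. ft v = 1}"
        "mcost E M \<le> enat (length fs - 1)" using lower[OF sy] by blast
      then show "(INF M \<in> perfect_matchings {v. f0 v = 1} {v. ft v = 1}. mcost E M) \<le> enat (length fs - 1)"
        by (meson INF_lower order_trans)
    qed
  qed
  then show ?thesis unfolding mcost_def .
qed

end
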